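(* Let $p$ be an odd prime and let $\mathcal{L}=(L_1,\dots,L_m)$ be a system of linear forms in $d$ variables with coefficients in $\mathbb{F}_p$, written $L_i(x_1,\dots,x_d)=\sum_{r=1}^d\gamma^{(i)}_r x_r$. Suppose that the $d\times d$ matrices $\Gamma^{(i)}=(\gamma^{(i)}_r\gamma^{(i)}_s)_{r,s=1}^d$, $i=1,\dots,m$, are linearly dependent over $\mathbb{F}_p$ (i.e. the quadratic forms $L_i^TL_i$ are linearly dependent). Then there exists $\epsilon>0$ such that for every $\delta>0$ there exist $n$ and a set $A\subset\mathbb{F}_p^n$, of density $\alpha=|A|/p^n$, with the following two properties: (i) the balanced function $f=1_A-\alpha$ satisfies $\|f\|_{U^2}\le\delta$; (ii) if $\mathbf{x}=(x_1,\dots,x_d)$ is chosen uniformly at random from $(\mathbb{F}_p^n)^d$, then the probability that $L_i(\mathbf{x})\in A$ for every $i=1,\dots,m$ is at least $\alpha^m+\epsilon$.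
   Context: For $\mathbf{x}=(x_1,\dots,x_d)\in(\mathbb{F}_p^n)^d$, $L_i(\mathbf{x})=\sum_r\gamma^{(i)}_r x_r\in\mathbb{F}_p^n$. For $f:\mathbb{F}_p^n\to\mathbb{C}$, the $U^2$-norm is defined by $\|f\|_{U^2}^4=\mathbb{E}_{x,h_1,h_2\in\mathbb{F}_p^n}f(x)\overline{f(x+h_1)}\,\overline{f(x+h_2)}f(x+h_1+h_2)$, expectations being uniform averages. $1_A$ denotes the characteristic function of $A$. *)

theory Defs
  imports "HOL-Analysis.Analysis"
begin

text \<open>The field F_p is modelled by a finite field type 'a with CARD('a) = p (p prime).
  A vector of F_p^n is a function nat => 'a vanishing outside {..<n}.\<close>

definition vecs :: "nat \<Rightarrow> (nat \<Rightarrow> 'a::zero) set" where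
  "vecs n = {x. \<forall>j\<ge>n. x j = 0}"

definition linform :: "nat \<Rightarrow> (nat \<Rightarrow> nat \<Rightarrow> 'a::comm_ring) \<Rightarrow> nat \<Rightarrow> (nat \<Rightarrow> nat \<Rightarrow> 'a) \<Rightarrow> (nat \<Rightarrow> 'a)" where
  "linform d gam i xs = (\<lambda>j. \<Sum>r<d. gam i r * xs r j)"

definition quad_forms_dependent :: "nat \<Rightarrow> nat \<Rightarrow> (nat \<Rightarrow> nat \<Rightarrow> 'a::comm_ring) \<Rightarrow> bool" where
  "quad_forms_dependent m d gam \<longleftrightarrow>
     (\<exists>c :: nat \<Rightarrow> 'a. (\<exists>i<m. c i \<noteq> 0) \<and>
        (\<forall>r<d. \<forall>s<d. (\<Sum>i<m. c i * (gam i r * gam i s)) = 0))"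

definition vadd :: "(nat \<Rightarrow> 'a::plus) \<Rightarrow> (nat \<Rightarrow> 'a) \<Rightarrow> (nat \<Rightarrow> 'a)" where
  "vadd x y = (\<lambda>j. x j + y j)"

definition U2_pow4 :: "nat \<Rightarrow> ((nat \<Rightarrow> 'a::{finite,comm_ring}) \<Rightarrow> complex) \<Rightarrow> complex" where
  "U2_pow4 n f = (\<Sum>x\<in>vecs n. \<Sum>h1\<in>vecs n. \<Sum>h2\<in>vecs n.
      f x * cnj (f (vadd x h1)) * cnj (f (vadd x h2)) * f (vadd (vadd x h1) h2)) / of_nat (card (vecs n :: (nat \<Rightarrow> 'a) set) ^ 3)"

definition U2_norm :: "nat \<Rightarrow> ((nat \<Rightarrow> 'a::{finite,comm_ring}) \<Rightarrow> complex) \<Rightarrow> real" where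
  "U2_norm n f = root 4 (Re (U2_pow4 n f))"

end

theory Submission
  imports Defs "HOL-Number_Theory.Number_Theory"
begin


lemma CHAR_eq_CARD:
  assumes "prime CARD('a::{field,finite})"
  shows "CHAR('a) = CARD('a)"
proof -
  have "CHAR('a) dvd CARD('a)" by (rule CHAR_dvd_CARD)
  moreover have "CHAR('a) \<noteq> 1" by simp
  ultimately show ?thesis using assms by (metis prime_nat_iff)
qed

lemma char_exists:
  assumes pr: "prime CARD('a::{field,finite})"
  shows "\<exists>\<psi>::'a \<Rightarrow> complex. (\<forall>a b. \<psi>(a+b) = \<psi> a * \<psi> b) \<and> (\<exists>c. \<psi> c \<noteq> 1) \<and> \<psi> 0 = 1"
proof -
  define p where "p = CARD('a)"
  have p2: "p \<ge> 2" using pr prime_ge_2_nat p_def by blast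
  have ch: "CHAR('a) = p" using CHAR_eq_CARD[OF pr] p_def by simp
  have eqiff: "of_nat k = (of_nat k' :: 'a) \<longleftrightarrow> k mod p = k' mod p" for k k'
    using of_nat_eq_iff_cong_CHAR[of k k', where 'a='a] ch by (simp add: cong_def)
  have inj: "inj_on (of_nat :: nat \<Rightarrow> 'a) {..<p}"
    by (auto simp: inj_on_def eqiff)
  have "card ((of_nat :: nat \<Rightarrow> 'a) ` {..<p}) = p" using card_image[OF inj] by simp
  hence img: "(of_nat :: nat \<Rightarrow> 'a) ` {..<p} = UNIV"
    by (metis card_subset_eq finite p_def subset_UNIV)
  define idx where "idx a = (SOME k. k < p \<and> (of_nat k :: 'a) = a)" for a
  have idx: "idx a < p \<and> of_nat (idx a) = a" for a
  proof -
    have "\<exists>k. k < p \<and> (of_nat k :: 'a) = a" using img by (metis UNIV_I imageE lessThan_iff)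
    thus ?thesis unfolding idx_def by (rule someI_ex)
  qed
  have idxu: "k < p \<Longrightarrow> of_nat k = a \<Longrightarrow> idx a = k" for k a
    using idx[of a] eqiff[of k "idx a"] by simp
  define \<psi> where "\<psi> a = cis (2 * pi * real (idx a) / real p)" for a
  have add: "\<psi> (a+b) = \<psi> a * \<psi> b" for a b
  proof -
    define s where "s = idx a + idx b"
    have "of_nat s = a + b" using idx[of a] idx[of b] s_def by simp
    hence "of_nat (s mod p) = a + b" using eqiff[of "s mod p" s] by simp
    hence l: "idx (a+b) = s mod p" using idxu p2 by simp
    have sr: "real s = real (s mod p) + real p * real (s div p)"
      by (metis of_nat_add of_nat_mult mod_div_mult_eq add.commute mult.commute)
    have "\<psi> a * \<psi> b = cis (2 * pi * real s / real p)"
      unfolding \<psi>_def cis_mult s_def by (simp add: add_divide_distrib algebra_simps)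
    also have "2 * pi * real s / real p = 2 * pi * real (s mod p) / real p + 2 * pi * real (s div p)"
      using p2 by (simp add: sr field_simps)
    also have "cis \<dots> = cis (2 * pi * real (s mod p) / real p)"
      by (simp add: cis_mult[symmetric])
    finally show ?thesis unfolding \<psi>_def l by simp
  qed
  have "idx 1 = 1" using idxu[of 1 1] p2 by simp
  hence "\<psi> 1 \<noteq> 1"
  proof -
    assume i1: "idx 1 = 1"
    show "\<psi> 1 \<noteq> 1"
    proof
      assume "\<psi> 1 = 1"
      hence "cos (2 * pi / real p) = 1" unfolding \<psi>_def i1
        by (metis Re_complex_of_real complex_of_real_def cis.sel(1) of_nat_1 mult.right_neutral one_complex.sel(1))
      then obtain n :: int where n: "2 * pi / real p = real_of_int n * 2 * pi" using cos_one_2pi_int by blast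
      have h: "(2*pi) * (1 / real p) = (2*pi) * real_of_int n" using n by (simp add: field_simps)
      have "1 / real p = real_of_int n"
        by (rule mult_left_cancel[THEN iffD1, OF _ h]) (use pi_gt_zero in simp)
      moreover have "0 < 1 / real p" "1 / real p < 1" using p2 by auto
      ultimately have "0 < real_of_int n" "real_of_int n < 1" by auto
      hence "0 < n" "n < 1" by simp_all
      thus False by linarith
    qed
  qed
  moreover have "\<psi> 0 = 1" using idxu[of 0 0] p2 unfolding \<psi>_def by simp
  ultimately show ?thesis using add by blast
qed

definition kerc :: "nat set \<Rightarrow> (nat \<Rightarrow> nat \<Rightarrow> 'a::{field,finite}) \<Rightarrow> nat" where
  "kerc I M = card {u \<in> PiE I (\<lambda>_. UNIV). \<forall>s\<in>I. (\<Sum>r\<in>I. u r * M r s) = 0}"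

lemma prod_if_const:
  "finite I \<Longrightarrow> (\<Prod>i\<in>I. if P i then c else 0) = (if \<forall>i\<in>I. P i then c ^ card I else (0::'b::comm_semiring_1))"
  by (induction I rule: finite_induct) auto

lemma sum_if_const:
  "finite A \<Longrightarrow> (\<Sum>u\<in>A. if P u then c else 0) = of_nat (card {u\<in>A. P u}) * (c::'b::comm_semiring_1)"
proof -
  assume f: "finite A"
  have "(\<Sum>u\<in>A. if P u then c else 0) = (\<Sum>u\<in>{u\<in>A. P u}. c)"
    using f by (rule sum.inter_filter[symmetric])
  thus ?thesis by simp
qed

locale chr =
  fixes \<psi> :: "'a::{field,finite} \<Rightarrow> complex"
  assumes padd: "\<psi> (a + b) = \<psi> a * \<psi> b"
    and nt: "\<exists>c. \<psi> c \<noteq> 1"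
    and p0: "\<psi> 0 = 1"
begin

lemma psi0: "\<psi> 0 = 1" by (rule p0)

lemma psi_sum: "finite S \<Longrightarrow> \<psi> (\<Sum>i\<in>S. f i) = (\<Prod>i\<in>S. \<psi> (f i))"
  by (induction S rule: finite_induct) (auto simp: psi0 padd)

lemma sum_psi: "(\<Sum>t\<in>UNIV. \<psi> (s * t)) = (if s = 0 then of_nat CARD('a) else 0)"
proof (cases "s = 0")
  case True thus ?thesis by (simp add: psi0)
next
  case False
  obtain c where c: "\<psi> c \<noteq> 1" using nt by blast
  define S where "S = (\<Sum>t\<in>UNIV. \<psi> t)"
  have "(\<Sum>t\<in>UNIV. \<psi> (s * t)) = S"
    unfolding S_def
    by (rule sum.reindex_bij_witness[of _ "\<lambda>t. t / s" "\<lambda>t. s * t"]) (use False in auto)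
  moreover have "S = \<psi> c * S"
  proof -
  have "S = (\<Sum>t\<in>UNIV. \<psi> (t + c))"
    unfolding S_def
    by (rule sum.reindex_bij_witness[of _ "\<lambda>t. t + c" "\<lambda>t. t - c"]) auto
  also have "(\<Sum>t\<in>UNIV. \<psi> (t + c)) = \<psi> c * S"
    unfolding S_def by (simp add: padd sum_distrib_left mult.commute)
  finally show "S = \<psi> c * S" .
  qed
  hence "S = 0" using c by (metis mult_cancel_right1 mult.commute)
  ultimately show ?thesis using False by simp
qed

lemma indic: "(\<Sum>t\<in>UNIV. \<psi> (t * z)) = (if z = 0 then of_nat CARD('a) else 0)"
  using sum_psi[of z] by (simp add: mult.commute)

lemma eval_E:
  assumes fin: "finite I"
  shows "(\<Sum>u\<in>PiE I (\<lambda>_. UNIV). \<Sum>v\<in>PiE I (\<lambda>_. UNIV). \<psi> (\<Sum>r\<in>I. \<Sum>s\<in>I. M r s * u r * v s))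
    = of_nat (CARD('a) ^ card I * kerc I M)"
proof -
  have inner: "(\<Sum>v\<in>PiE I (\<lambda>_. UNIV). \<psi> (\<Sum>r\<in>I. \<Sum>s\<in>I. M r s * u r * v s))
     = (if \<forall>s\<in>I. (\<Sum>r\<in>I. u r * M r s) = 0 then of_nat (CARD('a) ^ card I) else 0)" for u
  proof -
    have eq: "(\<Sum>r\<in>I. \<Sum>s\<in>I. M r s * u r * v s) = (\<Sum>s\<in>I. (\<Sum>r\<in>I. u r * M r s) * v s)" for v
      by (subst sum.swap) (simp add: sum_distrib_left sum_distrib_right mult_ac)
    have "(\<Sum>v\<in>PiE I (\<lambda>_. UNIV). \<psi> (\<Sum>r\<in>I. \<Sum>s\<in>I. M r s * u r * v s))
        = (\<Sum>v\<in>PiE I (\<lambda>_. UNIV). \<Prod>s\<in>I. \<psi> ((\<Sum>r\<in>I. u r * M r s) * v s))"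
      by (simp only: eq psi_sum[OF fin])
    also have "\<dots> = (\<Prod>s\<in>I. \<Sum>t\<in>UNIV. \<psi> ((\<Sum>r\<in>I. u r * M r s) * t))"
      by (rule prod_sum_PiE[symmetric]) (use fin in auto)
    also have "\<dots> = (\<Prod>s\<in>I. if (\<Sum>r\<in>I. u r * M r s) = 0 then of_nat CARD('a) else 0)"
      by (simp only: sum_psi)
    also have "\<dots> = (if \<forall>s\<in>I. (\<Sum>r\<in>I. u r * M r s) = 0 then of_nat CARD('a) ^ card I else 0)"
      by (rule prod_if_const[OF fin])
    finally show ?thesis by simp
  qed
  have "(\<Sum>u\<in>PiE I (\<lambda>_. UNIV). \<Sum>v\<in>PiE I (\<lambda>_. UNIV). \<psi> (\<Sum>r\<in>I. \<Sum>s\<in>I. M r s * u r * v s))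
     = (\<Sum>u\<in>PiE I (\<lambda>_. UNIV). if \<forall>s\<in>I. (\<Sum>r\<in>I. u r * M r s) = 0 then of_nat (CARD('a) ^ card I) else 0)"
    by (simp only: inner)
  also have "\<dots> = of_nat (kerc I M) * of_nat (CARD('a) ^ card I)"
    unfolding kerc_def by (rule sum_if_const) (use fin in \<open>auto intro: finite_PiE\<close>)
  finally show ?thesis by simp
qed

end


lemma ext_sum:
  fixes F :: "(nat \<Rightarrow> nat \<Rightarrow> 'a::zero) \<Rightarrow> 'c::comm_monoid_add"
  assumes fin: "finite I"
  shows "(\<Sum>xs\<in>PiE I (\<lambda>_. vecs (Suc n)). F xs)
     = (\<Sum>ys\<in>PiE I (\<lambda>_. vecs n). \<Sum>u\<in>PiE I (\<lambda>_. UNIV). F (\<lambda>r\<in>I. (ys r)(n := u r)))"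
proof -
  have "(\<Sum>ys\<in>PiE I (\<lambda>_. vecs n). \<Sum>u\<in>PiE I (\<lambda>_. UNIV). F (\<lambda>r\<in>I. (ys r)(n := u r)))
      = (\<Sum>(ys,u)\<in>PiE I (\<lambda>_. vecs n) \<times> PiE I (\<lambda>_. UNIV). F (\<lambda>r\<in>I. (ys r)(n := u r)))"
    by (rule sum.cartesian_product)
  also have "\<dots> = (\<Sum>xs\<in>PiE I (\<lambda>_. vecs (Suc n)). F xs)"
    by (rule sum.reindex_bij_witness[of _ "\<lambda>xs. ((\<lambda>r\<in>I. (xs r)(n := 0)), (\<lambda>r\<in>I. xs r n))"
        "\<lambda>(ys,u). (\<lambda>r\<in>I. (ys r)(n := u r))"])
       (auto simp: fun_eq_iff PiE_iff extensional_def vecs_def)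
  finally show ?thesis by simp
qed

lemma vecs0: "vecs 0 = {\<lambda>_. 0}"
  by (auto simp: vecs_def)

lemma pair_prod:
  fixes g :: "(nat \<Rightarrow> 'a::zero) \<Rightarrow> (nat \<Rightarrow> 'a) \<Rightarrow> 'c::comm_semiring_1"
  assumes fin: "finite I"
  shows "(\<Sum>xs\<in>PiE I (\<lambda>_. vecs (2*k) :: (nat\<Rightarrow>'a) set). \<Prod>j<k. g (\<lambda>r\<in>I. xs r (2*j)) (\<lambda>r\<in>I. xs r (2*j+1)))
       = (\<Sum>u\<in>PiE I (\<lambda>_. UNIV). \<Sum>v\<in>PiE I (\<lambda>_. UNIV). g u v) ^ k"
proof (induction k)
  case 0
  have "PiE I (\<lambda>_. vecs 0 :: (nat \<Rightarrow> 'a) set) = {\<lambda>r\<in>I. \<lambda>_. 0}"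
    by (simp add: vecs0 PiE_eq_singleton)
  thus ?case by simp
next
  case (Suc k)
  define G where "G u v = g u v" for u v
  have step: "(\<Sum>xs\<in>PiE I (\<lambda>_. vecs (2*Suc k) :: (nat\<Rightarrow>'a) set). \<Prod>j<Suc k. g (\<lambda>r\<in>I. xs r (2*j)) (\<lambda>r\<in>I. xs r (2*j+1)))
      = (\<Sum>zs\<in>PiE I (\<lambda>_. vecs (2*k) :: (nat\<Rightarrow>'a) set). \<Sum>u\<in>PiE I (\<lambda>_. UNIV). \<Sum>v\<in>PiE I (\<lambda>_. UNIV).
          (\<Prod>j<k. g (\<lambda>r\<in>I. zs r (2*j)) (\<lambda>r\<in>I. zs r (2*j+1))) * g u v)"
  proof -
    have e2: "2 * Suc k = Suc (Suc (2*k))" by simp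
    have "(\<Sum>xs\<in>PiE I (\<lambda>_. vecs (2*Suc k) :: (nat\<Rightarrow>'a) set). \<Prod>j<Suc k. g (\<lambda>r\<in>I. xs r (2*j)) (\<lambda>r\<in>I. xs r (2*j+1)))
      = (\<Sum>zs\<in>PiE I (\<lambda>_. vecs (2*k) :: (nat\<Rightarrow>'a) set). \<Sum>u\<in>PiE I (\<lambda>_. UNIV). \<Sum>v\<in>PiE I (\<lambda>_. UNIV).
          (\<Prod>j<Suc k. g (\<lambda>r\<in>I. (\<lambda>r\<in>I. ((\<lambda>r\<in>I. (zs r)(2*k := u r)) r)(Suc (2*k) := v r)) r (2*j))
                       (\<lambda>r\<in>I. (\<lambda>r\<in>I. ((\<lambda>r\<in>I. (zs r)(2*k := u r)) r)(Suc (2*k) := v r)) r (2*j+1))))"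
      unfolding e2 by (simp only: ext_sum[OF fin])
    also have "\<dots> = (\<Sum>zs\<in>PiE I (\<lambda>_. vecs (2*k) :: (nat\<Rightarrow>'a) set). \<Sum>u\<in>PiE I (\<lambda>_. UNIV). \<Sum>v\<in>PiE I (\<lambda>_. UNIV).
          (\<Prod>j<k. g (\<lambda>r\<in>I. zs r (2*j)) (\<lambda>r\<in>I. zs r (2*j+1))) * g u v)"
    proof (intro sum.cong refl)
      fix zs u v assume zs: "zs \<in> PiE I (\<lambda>_. vecs (2*k) :: (nat\<Rightarrow>'a) set)" and u: "u \<in> PiE I (\<lambda>_. UNIV :: 'a set)"
        and v: "v \<in> PiE I (\<lambda>_. UNIV :: 'a set)"
      have a1: "(\<lambda>r\<in>I. (\<lambda>r\<in>I. ((\<lambda>r\<in>I. (zs r)(2*k := u r)) r)(Suc (2*k) := v r)) r (2*j)) = (\<lambda>r\<in>I. zs r (2*j))"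
        if "j < k" for j
        using that by (intro restrict_ext) auto
      have a2: "(\<lambda>r\<in>I. (\<lambda>r\<in>I. ((\<lambda>r\<in>I. (zs r)(2*k := u r)) r)(Suc (2*k) := v r)) r (2*j+1)) = (\<lambda>r\<in>I. zs r (2*j+1))"
        if "j < k" for j
        using that by (intro restrict_ext) auto
      have b1: "(\<lambda>r\<in>I. (\<lambda>r\<in>I. ((\<lambda>r\<in>I. (zs r)(2*k := u r)) r)(Suc (2*k) := v r)) r (2*k)) = u"
        using u by (auto simp: fun_eq_iff PiE_iff extensional_def)
      have b2: "(\<lambda>r\<in>I. (\<lambda>r\<in>I. ((\<lambda>r\<in>I. (zs r)(2*k := u r)) r)(Suc (2*k) := v r)) r (2*k+1)) = v"
        using v by (auto simp: fun_eq_iff PiE_iff extensional_def)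
      show "(\<Prod>j<Suc k. g (\<lambda>r\<in>I. (\<lambda>r\<in>I. ((\<lambda>r\<in>I. (zs r)(2*k := u r)) r)(Suc (2*k) := v r)) r (2*j))
                       (\<lambda>r\<in>I. (\<lambda>r\<in>I. ((\<lambda>r\<in>I. (zs r)(2*k := u r)) r)(Suc (2*k) := v r)) r (2*j+1)))
         = (\<Prod>j<k. g (\<lambda>r\<in>I. zs r (2*j)) (\<lambda>r\<in>I. zs r (2*j+1))) * g u v"
      proof -
        have c: "(\<Prod>j<k. g (\<lambda>r\<in>I. (\<lambda>r\<in>I. ((\<lambda>r\<in>I. (zs r)(2*k := u r)) r)(Suc (2*k) := v r)) r (2*j))
                       (\<lambda>r\<in>I. (\<lambda>r\<in>I. ((\<lambda>r\<in>I. (zs r)(2*k := u r)) r)(Suc (2*k) := v r)) r (2*j+1)))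
           = (\<Prod>j<k. g (\<lambda>r\<in>I. zs r (2*j)) (\<lambda>r\<in>I. zs r (2*j+1)))"
        proof (rule prod.cong[OF refl])
          fix j assume "j \<in> {..<k}"
          hence j: "j < k" by simp
          show "g (\<lambda>r\<in>I. (\<lambda>r\<in>I. ((\<lambda>r\<in>I. (zs r)(2*k := u r)) r)(Suc (2*k) := v r)) r (2*j))
                       (\<lambda>r\<in>I. (\<lambda>r\<in>I. ((\<lambda>r\<in>I. (zs r)(2*k := u r)) r)(Suc (2*k) := v r)) r (2*j+1))
            = g (\<lambda>r\<in>I. zs r (2*j)) (\<lambda>r\<in>I. zs r (2*j+1))"
            by (simp only: a1[OF j] a2[OF j])
        qed
        show ?thesis by (simp only: prod.lessThan_Suc c b1 b2)
      qed
    qed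
    finally show ?thesis .
  qed
  also have "\<dots> = (\<Sum>zs\<in>PiE I (\<lambda>_. vecs (2*k) :: (nat\<Rightarrow>'a) set). \<Prod>j<k. g (\<lambda>r\<in>I. zs r (2*j)) (\<lambda>r\<in>I. zs r (2*j+1)))
       * (\<Sum>u\<in>PiE I (\<lambda>_. UNIV). \<Sum>v\<in>PiE I (\<lambda>_. UNIV). g u v)"
    by (subst sum_distrib_right) (simp only: sum_distrib_left)
  also have "\<dots> = (\<Sum>u\<in>PiE I (\<lambda>_. UNIV). \<Sum>v\<in>PiE I (\<lambda>_. UNIV). g u v) ^ Suc k"
    by (subst Suc.IH) (simp add: power_Suc mult.commute)
  finally show ?case .
qed


definition Qf :: "nat \<Rightarrow> (nat \<Rightarrow> 'a::comm_ring) \<Rightarrow> 'a" where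
  "Qf k y = (\<Sum>j<k. y (2*j) * y (2*j+1))"

definition Mx :: "nat \<Rightarrow> (nat \<Rightarrow> nat \<Rightarrow> 'a::comm_ring) \<Rightarrow> (nat \<Rightarrow> 'a) \<Rightarrow> nat \<Rightarrow> nat \<Rightarrow> 'a" where
  "Mx m g a r s = (\<Sum>i<m. a i * (g i r * g i s))"

lemma Qlin: "Qf k (linform D g i xs) = (\<Sum>j<k. \<Sum>r<D. \<Sum>s<D. g i r * g i s * (xs r (2*j) * xs s (2*j+1)))"
  unfolding Qf_def linform_def by (simp add: sum_product mult_ac)

lemma Qcomb: "(\<Sum>i<m. a i * Qf k (linform D g i xs))
   = (\<Sum>j<k. \<Sum>r<D. \<Sum>s<D. Mx m g a r s * xs r (2*j) * xs s (2*j+1))"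
proof -
  have "(\<Sum>i<m. a i * Qf k (linform D g i xs))
      = (\<Sum>i<m. \<Sum>j<k. \<Sum>r<D. \<Sum>s<D. a i * (g i r * g i s) * (xs r (2*j) * xs s (2*j+1)))"
    by (simp add: Qlin sum_distrib_left mult_ac)
  also have "\<dots> = (\<Sum>j<k. \<Sum>i<m. \<Sum>r<D. \<Sum>s<D. a i * (g i r * g i s) * (xs r (2*j) * xs s (2*j+1)))"
    by (rule sum.swap)
  also have "\<dots> = (\<Sum>j<k. \<Sum>r<D. \<Sum>i<m. \<Sum>s<D. a i * (g i r * g i s) * (xs r (2*j) * xs s (2*j+1)))"
    by (rule sum.cong[OF refl], rule sum.swap)
  also have "\<dots> = (\<Sum>j<k. \<Sum>r<D. \<Sum>s<D. \<Sum>i<m. a i * (g i r * g i s) * (xs r (2*j) * xs s (2*j+1)))"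
    by (rule sum.cong[OF refl], rule sum.cong[OF refl], rule sum.swap)
  also have "\<dots> = (\<Sum>j<k. \<Sum>r<D. \<Sum>s<D. Mx m g a r s * xs r (2*j) * xs s (2*j+1))"
    unfolding Mx_def by (simp add: sum_distrib_left sum_distrib_right mult_ac)
  finally show ?thesis .
qed

context chr begin

lemma weighted:
  "(\<Sum>xs\<in>PiE {..<D} (\<lambda>_. vecs (2*k)). \<Prod>i<m. (\<Sum>t\<in>UNIV. w i t * \<psi> (t * Qf k (linform D g i xs))))
   = (\<Sum>a\<in>PiE {..<m} (\<lambda>_. UNIV). (\<Prod>i<m. w i (a i)) * of_nat (CARD('a) ^ D * kerc {..<D} (Mx m g a)) ^ k)"
proof -
  have "(\<Sum>xs\<in>PiE {..<D} (\<lambda>_. vecs (2*k)). \<Prod>i<m. (\<Sum>t\<in>UNIV. w i t * \<psi> (t * Qf k (linform D g i xs))))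
     = (\<Sum>xs\<in>PiE {..<D} (\<lambda>_. vecs (2*k)). \<Sum>a\<in>PiE {..<m} (\<lambda>_. UNIV). \<Prod>i<m. w i (a i) * \<psi> (a i * Qf k (linform D g i xs)))"
    by (rule sum.cong[OF refl], rule prod_sum_PiE) auto
  also have "\<dots> = (\<Sum>a\<in>PiE {..<m} (\<lambda>_. UNIV). \<Sum>xs\<in>PiE {..<D} (\<lambda>_. vecs (2*k)). (\<Prod>i<m. w i (a i)) * \<psi> (\<Sum>i<m. a i * Qf k (linform D g i xs)))"
    by (subst sum.swap) (simp add: prod.distrib psi_sum)
  also have "\<dots> = (\<Sum>a\<in>PiE {..<m} (\<lambda>_. UNIV). (\<Prod>i<m. w i (a i)) *
        (\<Sum>xs\<in>PiE {..<D} (\<lambda>_. vecs (2*k)). \<Prod>j<k. (\<lambda>u v. \<psi> (\<Sum>r<D. \<Sum>s<D. Mx m g a r s * u r * v s))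
            (\<lambda>r\<in>{..<D}. xs r (2*j)) (\<lambda>r\<in>{..<D}. xs r (2*j+1))))"
    by (simp add: sum_distrib_left Qcomb psi_sum)
  also have "\<dots> = (\<Sum>a\<in>PiE {..<m} (\<lambda>_. UNIV). (\<Prod>i<m. w i (a i)) * of_nat (CARD('a) ^ D * kerc {..<D} (Mx m g a)) ^ k)"
  proof (rule sum.cong[OF refl])
    fix a
    have pp: "(\<Sum>xs\<in>PiE {..<D} (\<lambda>_. vecs (2*k)). \<Prod>j<k. (\<lambda>u v. \<psi> (\<Sum>r<D. \<Sum>s<D. Mx m g a r s * u r * v s))
            (\<lambda>r\<in>{..<D}. xs r (2*j)) (\<lambda>r\<in>{..<D}. xs r (2*j+1)))
       = (\<Sum>u\<in>PiE {..<D} (\<lambda>_. UNIV). \<Sum>v\<in>PiE {..<D} (\<lambda>_. UNIV). \<psi> (\<Sum>r<D. \<Sum>s<D. Mx m g a r s * u r * v s)) ^ k"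
      by (rule pair_prod[where I="{..<D}" and g="\<lambda>u v. \<psi> (\<Sum>r<D. \<Sum>s<D. Mx m g a r s * u r * v s)" and k=k, OF finite_lessThan])
    show "(\<Prod>i<m. w i (a i)) *
        (\<Sum>xs\<in>PiE {..<D} (\<lambda>_. vecs (2*k)). \<Prod>j<k. (\<lambda>u v. \<psi> (\<Sum>r<D. \<Sum>s<D. Mx m g a r s * u r * v s))
            (\<lambda>r\<in>{..<D}. xs r (2*j)) (\<lambda>r\<in>{..<D}. xs r (2*j+1)))
       = (\<Prod>i<m. w i (a i)) * of_nat (CARD('a) ^ D * kerc {..<D} (Mx m g a)) ^ k"
      unfolding pp eval_E[OF finite_lessThan] card_lessThan by simp
  qed
  finally show ?thesis .
qed

end





lemma vecs_bij: "bij_betw (\<lambda>x. restrict x {..<n}) (vecs n) (PiE {..<n} (\<lambda>_. UNIV :: 'a::zero set))"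
proof (rule bij_betw_byWitness[where f'="\<lambda>f j. if j < n then f j else 0"])
  show "\<forall>a\<in>(vecs n :: (nat \<Rightarrow> 'a) set). (\<lambda>j. if j < n then restrict a {..<n} j else 0) = a"
  proof
    fix a :: "nat \<Rightarrow> 'a" assume a: "a \<in> vecs n"
    have z: "a j = 0" if "\<not> j < n" for j using a that unfolding vecs_def by simp
    show "(\<lambda>j. if j < n then restrict a {..<n} j else 0) = a"
    proof (rule ext)
      fix j
      show "(if j < n then restrict a {..<n} j else 0) = a j"
        by (cases "j < n") (simp_all add: z)
    qed
  qed
  show "\<forall>a'\<in>PiE {..<n} (\<lambda>_. UNIV :: 'a set). restrict (\<lambda>j. if j < n then a' j else 0) {..<n} = a'"
  proof
    fix a' :: "nat \<Rightarrow> 'a" assume a: "a' \<in> PiE {..<n} (\<lambda>_. UNIV)"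
    have u: "a' j = undefined" if "\<not> j < n" for j using a that unfolding PiE_def extensional_def by simp
    show "restrict (\<lambda>j. if j < n then a' j else 0) {..<n} = a'"
    proof (rule ext)
      fix j
      show "restrict (\<lambda>j. if j < n then a' j else 0) {..<n} j = a' j"
        by (cases "j < n") (simp_all add: u)
    qed
  qed
  show "(\<lambda>x. restrict x {..<n}) ` (vecs n :: (nat \<Rightarrow> 'a) set) \<subseteq> PiE {..<n} (\<lambda>_. UNIV)"
    by (intro image_subsetI, subst restrict_PiE_iff) simp
  show "(\<lambda>f j. if j < n then f j else 0) ` PiE {..<n} (\<lambda>_. UNIV :: 'a set) \<subseteq> vecs n"
    by (intro image_subsetI) (simp add: vecs_def)
qed

lemma finite_vecs [simp]: "finite (vecs n :: (nat \<Rightarrow> 'a::{zero,finite}) set)"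
proof -
  have "finite (PiE {..<n} (\<lambda>_. UNIV :: 'a set))" by (rule finite_PiE) auto
  thus ?thesis using bij_betw_finite[OF vecs_bij[where n=n and 'a='a]] by simp
qed

lemma card_vecs: "card (vecs n :: (nat \<Rightarrow> 'a::{zero,finite}) set) = CARD('a) ^ n"
  using bij_betw_same_card[OF vecs_bij[where n=n and 'a='a]] by (simp add: card_PiE)

lemma bij1_b: "bij_betw (\<lambda>xs. xs 0) (PiE {..<1::nat} (\<lambda>_. S)) S"
proof (rule bij_betw_byWitness[where f'="\<lambda>y. \<lambda>i\<in>{..<1::nat}. y"])
  show "\<forall>a\<in>PiE {..<1::nat} (\<lambda>_. S). (\<lambda>i\<in>{..<1::nat}. a 0) = a"
  proof
    fix a assume a: "a \<in> PiE {..<1::nat} (\<lambda>_. S)"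
    show "(\<lambda>i\<in>{..<1::nat}. a 0) = a"
      by (rule ext) (use a in \<open>auto simp: PiE_def extensional_def\<close>)
  qed
  show "\<forall>a'\<in>S. (\<lambda>i\<in>{..<1::nat}. a') 0 = a'" by simp
  show "(\<lambda>xs. xs 0) ` PiE {..<1::nat} (\<lambda>_. S) \<subseteq> S" by auto
  show "(\<lambda>y. \<lambda>i\<in>{..<1::nat}. y) ` S \<subseteq> PiE {..<1::nat} (\<lambda>_. S)" by (intro image_subsetI, subst restrict_PiE_iff) simp
qed

lemma bij1: "(\<Sum>xs\<in>PiE {..<1::nat} (\<lambda>_. S). G (xs 0)) = (\<Sum>y\<in>S. (G y :: 'c::comm_monoid_add))"
  using sum.reindex_bij_betw[OF bij1_b[of S], where g=G] by simp


lemma bij3_b: "bij_betw (\<lambda>xs. (xs 0, xs 1, xs 2)) (PiE {..<3::nat} (\<lambda>_. S)) (S \<times> S \<times> S)"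
proof (rule bij_betw_byWitness[where f'="\<lambda>(x,y,z). \<lambda>i\<in>{..<3::nat}. if i = 0 then x else if i = 1 then y else z"])
  show "\<forall>a\<in>PiE {..<3::nat} (\<lambda>_. S). (case (a 0, a 1, a 2) of (x,y,z) \<Rightarrow> \<lambda>i\<in>{..<3::nat}. if i = 0 then x else if i = 1 then y else z) = a"
  proof
    fix a assume a: "a \<in> PiE {..<3::nat} (\<lambda>_. S)"
    have u: "a j = undefined" if "\<not> j < 3" for j using a that unfolding PiE_def extensional_def by simp
    show "(case (a 0, a 1, a 2) of (x,y,z) \<Rightarrow> \<lambda>i\<in>{..<3::nat}. if i = 0 then x else if i = 1 then y else z) = a"
    proof (rule ext)
      fix j :: nat
      have "j < 3 \<Longrightarrow> j = 0 \<or> j = 1 \<or> j = 2" by linarith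
      thus "(case (a 0, a 1, a 2) of (x,y,z) \<Rightarrow> \<lambda>i\<in>{..<3::nat}. if i = 0 then x else if i = 1 then y else z) j = a j"
        by (cases "j < 3") (auto simp: u)
    qed
  qed
  show "\<forall>a'\<in>S \<times> S \<times> S. (\<lambda>xs. (xs 0, xs 1, xs 2)) ((\<lambda>(x,y,z). \<lambda>i\<in>{..<3::nat}. if i = 0 then x else if i = 1 then y else z) a') = a'"
    by auto
  show "(\<lambda>xs. (xs 0, xs 1, xs 2)) ` PiE {..<3::nat} (\<lambda>_. S) \<subseteq> S \<times> S \<times> S"
    by (auto simp: PiE_def Pi_def)
  show "(\<lambda>(x,y,z). \<lambda>i\<in>{..<3::nat}. if i = 0 then x else if i = 1 then y else z) ` (S \<times> S \<times> S) \<subseteq> PiE {..<3::nat} (\<lambda>_. S)"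
  proof (rule image_subsetI)
    fix t assume t: "t \<in> S \<times> S \<times> S"
    obtain x y z where t': "t = (x,y,z)" by (cases t) auto
    show "(\<lambda>(x,y,z). \<lambda>i\<in>{..<3::nat}. if i = 0 then x else if i = 1 then y else z) t \<in> PiE {..<3::nat} (\<lambda>_. S)"
      unfolding t' case_prod_conv restrict_PiE_iff using t t' by auto
  qed
qed

lemma bij3: "(\<Sum>xs\<in>PiE {..<3::nat} (\<lambda>_. S). G (xs 0) (xs 1) (xs 2)) = (\<Sum>x\<in>S. \<Sum>y\<in>S. \<Sum>z\<in>S. (G x y z :: 'c::comm_monoid_add))"
proof -
  have "(\<Sum>xs\<in>PiE {..<3::nat} (\<lambda>_. S). G (xs 0) (xs 1) (xs 2)) = (\<Sum>(x,y,z)\<in>S \<times> S \<times> S. G x y z)"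
    using sum.reindex_bij_betw[OF bij3_b[of S], where g="\<lambda>(x,y,z). G x y z"] by simp
  also have "\<dots> = (\<Sum>x\<in>S. \<Sum>y\<in>S. \<Sum>z\<in>S. G x y z)"
    by (simp add: sum.cartesian_product)
  finally show ?thesis .
qed
lemma kerc_zero:
  fixes M :: "nat \<Rightarrow> nat \<Rightarrow> 'a::{field,finite}"
  assumes "finite I" "\<forall>r\<in>I. \<forall>s\<in>I. M r s = 0"
  shows "kerc I M = CARD('a::{field,finite}) ^ card I"
proof -
  have "{u \<in> PiE I (\<lambda>_. UNIV :: 'a set). \<forall>s\<in>I. (\<Sum>r\<in>I. u r * M r s) = 0} = PiE I (\<lambda>_. UNIV)"
    using assms(2) by auto
  thus ?thesis unfolding kerc_def using assms(1) by (simp add: card_PiE)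
qed

lemma kerc_le:
  fixes M :: "nat \<Rightarrow> nat \<Rightarrow> 'a::{field,finite}"
  assumes fin: "finite I" and r0: "r0 \<in> I" and s0: "s0 \<in> I" and nz: "M r0 s0 \<noteq> 0"
  shows "kerc I M \<le> CARD('a::{field,finite}) ^ (card I - 1)"
proof -
  define K where "K = {u \<in> PiE I (\<lambda>_. UNIV :: 'a set). \<forall>s\<in>I. (\<Sum>r\<in>I. u r * M r s) = 0}"
  have inj: "inj_on (\<lambda>u. restrict u (I - {r0})) K"
  proof (rule inj_onI)
    fix u u' assume u: "u \<in> K" and u': "u' \<in> K" and eq: "restrict u (I - {r0}) = restrict u' (I - {r0})"
    have off: "u r = u' r" if "r \<in> I" "r \<noteq> r0" for r
      using fun_cong[OF eq, of r] that by simp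
    have "(\<Sum>r\<in>I. u r * M r s0) = u r0 * M r0 s0 + (\<Sum>r\<in>I - {r0}. u r * M r s0)"
      using fin r0 by (simp add: sum.remove)
    moreover have "(\<Sum>r\<in>I. u' r * M r s0) = u' r0 * M r0 s0 + (\<Sum>r\<in>I - {r0}. u' r * M r s0)"
      using fin r0 by (simp add: sum.remove)
    moreover have "(\<Sum>r\<in>I - {r0}. u r * M r s0) = (\<Sum>r\<in>I - {r0}. u' r * M r s0)"
      using off by (intro sum.cong) auto
    moreover have "(\<Sum>r\<in>I. u r * M r s0) = 0" "(\<Sum>r\<in>I. u' r * M r s0) = 0"
      using u u' s0 unfolding K_def by auto
    ultimately have "u r0 * M r0 s0 = u' r0 * M r0 s0" by (metis add_right_cancel)
    hence "u r0 = u' r0" using nz by simp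
    thus "u = u'" using u u' off unfolding K_def
      by (auto simp: fun_eq_iff PiE_iff extensional_def) (metis)
  qed
  have "card K \<le> card (PiE (I - {r0}) (\<lambda>_. UNIV :: 'a set))"
  proof -
    have img: "(\<lambda>u. restrict u (I - {r0})) ` K \<subseteq> PiE (I - {r0}) (\<lambda>_. UNIV)"
      by (intro image_subsetI, subst restrict_PiE_iff) simp
    have fin2: "finite (PiE (I - {r0}) (\<lambda>_. UNIV :: 'a set))" by (rule finite_PiE) (use fin in auto)
    show ?thesis by (rule card_inj_on_le[OF inj img fin2])
  qed
  also have "\<dots> = CARD('a) ^ (card I - 1)"
    using fin r0 by (simp add: card_PiE)
  finally show ?thesis unfolding kerc_def K_def .
qed

lemma kerc1:
  fixes M :: "nat \<Rightarrow> nat \<Rightarrow> 'a::{field,finite}"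
  shows "kerc {..<1} M = (if M 0 0 = 0 then CARD('a) else 1)"
proof -
  have "{u \<in> PiE {..<1} (\<lambda>_. UNIV :: 'a set). \<forall>s\<in>{..<1}. (\<Sum>r\<in>{..<1}. u r * M r s) = 0}
      = (\<lambda>t. \<lambda>i\<in>{..<1}. t) ` {t. t * M 0 0 = 0}"
    by (auto simp: PiE_iff extensional_def image_iff fun_eq_iff)
  moreover have "inj_on (\<lambda>t. \<lambda>i\<in>{..<1::nat}. t) (A :: 'a set)" for A
    by (rule inj_onI) (metis lessThan_iff restrict_apply' zero_less_one)
  moreover have "{t::'a. t * M 0 0 = 0} = (if M 0 0 = 0 then UNIV else {0})" by auto
  ultimately show ?thesis unfolding kerc_def by (simp add: card_image)
qed





lemma linform_vecs:
  assumes "xs \<in> PiE {..<D} (\<lambda>_. vecs n)"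
  shows "linform D g i xs \<in> vecs n"
  using assms unfolding linform_def vecs_def PiE_def Pi_def by auto

context chr begin

lemma cardA:
  "CARD('a) * card {y \<in> (vecs (2*k) :: (nat \<Rightarrow> 'a) set). Qf k y = (0::'a)} = CARD('a) ^ (2*k) + (CARD('a) - 1) * CARD('a) ^ k"
proof -
  define g1 :: "nat \<Rightarrow> nat \<Rightarrow> 'a" where "g1 = (\<lambda>_ _. 1)"
  have W: "(\<Sum>xs\<in>PiE {..<1} (\<lambda>_. (vecs (2*k) :: (nat \<Rightarrow> 'a) set)). \<Prod>i<1. (\<Sum>t\<in>UNIV. (\<lambda>_ _. 1) i t * \<psi> (t * Qf k (linform 1 g1 i xs))))
   = (\<Sum>a\<in>PiE {..<1} (\<lambda>_. UNIV). (\<Prod>i<1. (\<lambda>_ _. 1) i (a i)) * of_nat (CARD('a) ^ 1 * kerc {..<1} (Mx 1 g1 a)) ^ k)"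
    by (rule weighted)
  have lf: "linform 1 g1 0 xs = xs 0" for xs :: "nat \<Rightarrow> nat \<Rightarrow> 'a"
    unfolding linform_def g1_def by simp
  have lf': "linform (Suc 0) g1 0 xs = xs 0" for xs :: "nat \<Rightarrow> nat \<Rightarrow> 'a"
    unfolding linform_def g1_def by simp
  have "(\<Sum>xs\<in>PiE {..<1} (\<lambda>_. (vecs (2*k) :: (nat \<Rightarrow> 'a) set)). \<Prod>i<1. (\<Sum>t\<in>UNIV. (\<lambda>_ _. 1::complex) i t * \<psi> (t * Qf k (linform 1 g1 i xs))))
      = (\<Sum>xs\<in>PiE {..<1::nat} (\<lambda>_. (vecs (2*k) :: (nat \<Rightarrow> 'a) set)). (\<lambda>y. if Qf k y = 0 then of_nat CARD('a) else (0::complex)) (xs 0))"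
    by (simp add: lf lf' indic)
  also have "\<dots> = (\<Sum>y\<in>(vecs (2*k) :: (nat \<Rightarrow> 'a) set). if Qf k y = 0 then of_nat CARD('a) else (0::complex))"
    by (rule bij1)
  also have "\<dots> = of_nat (card {y \<in> (vecs (2*k) :: (nat \<Rightarrow> 'a) set). Qf k y = (0::'a)}) * of_nat CARD('a)"
    by (rule sum_if_const) simp
  finally have L: "(\<Sum>xs\<in>PiE {..<1} (\<lambda>_. (vecs (2*k) :: (nat \<Rightarrow> 'a) set)). \<Prod>i<1. (\<Sum>t\<in>UNIV. (\<lambda>_ _. 1::complex) i t * \<psi> (t * Qf k (linform 1 g1 i xs))))
     = of_nat (card {y \<in> (vecs (2*k) :: (nat \<Rightarrow> 'a) set). Qf k y = (0::'a)} * CARD('a))" by simp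
  have mx: "Mx 1 g1 a 0 0 = a 0" for a :: "nat \<Rightarrow> 'a" unfolding Mx_def g1_def by simp
  have "(\<Sum>a\<in>PiE {..<1} (\<lambda>_. UNIV). (\<Prod>i<1. (\<lambda>_ _. 1::complex) i (a i)) * of_nat (CARD('a) ^ 1 * kerc {..<1} (Mx 1 g1 a)) ^ k)
      = (\<Sum>a\<in>PiE {..<1::nat} (\<lambda>_. UNIV :: 'a set). (\<lambda>t. of_nat (CARD('a) * (if t = 0 then CARD('a) else 1)) ^ k) (a 0))"
  proof -
    have k1: "kerc {..<Suc 0} (Mx (Suc 0) g1 a) = (if a 0 = 0 then CARD('a) else 1)" for a
      using kerc1[of "Mx 1 g1 a"] mx[of a] by simp
    show ?thesis by (simp add: k1)
  qed
  also have "\<dots> = (\<Sum>t\<in>(UNIV::'a set). of_nat (CARD('a) * (if t = 0 then CARD('a) else 1)) ^ k)"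
    by (rule bij1)
  also have "\<dots> = of_nat (CARD('a) * CARD('a)) ^ k + (\<Sum>t\<in>UNIV - {0::'a}. of_nat (CARD('a) * (if t = 0 then CARD('a) else 1)) ^ k)"
    by (subst sum.remove[of UNIV "0::'a"]) simp_all
  also have "(\<Sum>t\<in>UNIV - {0::'a}. of_nat (CARD('a) * (if t = 0 then CARD('a) else 1)) ^ k) = (\<Sum>t\<in>UNIV - {0::'a}. (of_nat CARD('a) ^ k :: complex))"
    by (intro sum.cong) auto
  also have "\<dots> = of_nat (CARD('a) - 1) * of_nat CARD('a) ^ k"
    by (simp add:  card_Diff_singleton)
  finally have R: "(\<Sum>a\<in>PiE {..<1} (\<lambda>_. UNIV). (\<Prod>i<1. (\<lambda>_ _. 1::complex) i (a i)) * of_nat (CARD('a) ^ 1 * kerc {..<1} (Mx 1 g1 a)) ^ k)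
     = of_nat (CARD('a) ^ (2*k) + (CARD('a) - 1) * CARD('a) ^ k)" by (simp add: power_mult power2_eq_square power_mult_distrib)
  have "(of_nat (card {y \<in> (vecs (2*k) :: (nat \<Rightarrow> 'a) set). Qf k y = (0::'a)} * CARD('a)) :: complex) = of_nat (CARD('a) ^ (2*k) + (CARD('a) - 1) * CARD('a) ^ k)"
    using W L R by simp
  hence "card {y \<in> (vecs (2*k) :: (nat \<Rightarrow> 'a) set). Qf k y = (0::'a)} * CARD('a) = CARD('a) ^ (2*k) + (CARD('a) - 1) * CARD('a) ^ k"
    by (simp only: of_nat_eq_iff)
  thus ?thesis by (simp add: mult.commute)
qed

lemma countM:
  fixes gam :: "nat \<Rightarrow> nat \<Rightarrow> 'a"
  shows "CARD('a) ^ m * card {xs \<in> PiE {..<d} (\<lambda>_. vecs (2*k)). \<forall>i<m. Qf k (linform d gam i xs) = 0}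
     = (\<Sum>a\<in>PiE {..<m} (\<lambda>_. UNIV). (CARD('a) ^ d * kerc {..<d} (Mx m gam a)) ^ k)"
proof -
  have W: "(\<Sum>xs\<in>PiE {..<d} (\<lambda>_. vecs (2*k)). \<Prod>i<m. (\<Sum>t\<in>UNIV. (\<lambda>_ _. 1::complex) i t * \<psi> (t * Qf k (linform d gam i xs))))
   = (\<Sum>a\<in>PiE {..<m} (\<lambda>_. UNIV). (\<Prod>i<m. (\<lambda>_ _. 1::complex) i (a i)) * of_nat (CARD('a) ^ d * kerc {..<d} (Mx m gam a)) ^ k)"
    by (rule weighted)
  have "(\<Sum>xs\<in>PiE {..<d} (\<lambda>_. vecs (2*k)). \<Prod>i<m. (\<Sum>t\<in>UNIV. (\<lambda>_ _. 1::complex) i t * \<psi> (t * Qf k (linform d gam i xs))))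
     = (\<Sum>xs\<in>PiE {..<d} (\<lambda>_. vecs (2*k)). \<Prod>i\<in>{..<m}. if Qf k (linform d gam i xs) = 0 then of_nat CARD('a) else 0)"
    by (simp add: indic)
  also have "\<dots> = (\<Sum>xs\<in>PiE {..<d} (\<lambda>_. vecs (2*k)). if \<forall>i\<in>{..<m}. Qf k (linform d gam i xs) = 0 then of_nat CARD('a) ^ m else 0)"
    by (simp only: prod_if_const[OF finite_lessThan] card_lessThan)
  also have "\<dots> = of_nat (card {xs \<in> PiE {..<d} (\<lambda>_. vecs (2*k)). \<forall>i\<in>{..<m}. Qf k (linform d gam i xs) = 0}) * of_nat CARD('a) ^ m"
    by (rule sum_if_const) (auto intro: finite_PiE)
  finally have L0: "(\<Sum>xs\<in>PiE {..<d} (\<lambda>_. vecs (2*k)). \<Prod>i<m. (\<Sum>t\<in>UNIV. (\<lambda>_ _. 1::complex) i t * \<psi> (t * Qf k (linform d gam i xs))))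
     = of_nat (card {xs \<in> PiE {..<d} (\<lambda>_. vecs (2*k)). \<forall>i\<in>{..<m}. Qf k (linform d gam i xs) = 0}) * of_nat CARD('a) ^ m" .
  have "{xs \<in> PiE {..<d} (\<lambda>_. vecs (2*k)). \<forall>i\<in>{..<m}. Qf k (linform d gam i xs) = 0}
       = {xs \<in> PiE {..<d} (\<lambda>_. vecs (2*k)). \<forall>i<m. Qf k (linform d gam i xs) = 0}" by auto
  hence L: "(\<Sum>xs\<in>PiE {..<d} (\<lambda>_. vecs (2*k)). \<Prod>i<m. (\<Sum>t\<in>UNIV. (\<lambda>_ _. 1::complex) i t * \<psi> (t * Qf k (linform d gam i xs))))
     = of_nat (CARD('a) ^ m * card {xs \<in> PiE {..<d} (\<lambda>_. vecs (2*k)). \<forall>i<m. Qf k (linform d gam i xs) = 0})"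
    using L0 by (simp only: of_nat_mult of_nat_power mult.commute)
  have R: "(\<Sum>a\<in>PiE {..<m} (\<lambda>_. UNIV). (\<Prod>i<m. (\<lambda>_ _. 1::complex) i (a i)) * of_nat (CARD('a) ^ d * kerc {..<d} (Mx m gam a)) ^ k)
     = of_nat (\<Sum>a\<in>PiE {..<m} (\<lambda>_. UNIV). (CARD('a) ^ d * kerc {..<d} (Mx m gam a)) ^ k)"
    by simp
  show ?thesis using W L R by (simp only: of_nat_eq_iff)
qed

end



definition e4 :: "nat \<Rightarrow> nat \<Rightarrow> 'a::comm_ring_1" where
  "e4 i r = (if r = 0 then 1 else if r = 1 then (if i = 1 \<or> i = 3 then 1 else 0)
      else if r = 2 then (if i = 2 \<or> i = 3 then 1 else 0) else 0)"

lemma lessThan3: "{..<3::nat} = {0,1,2}" by auto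
lemma lessThan4: "{..<4::nat} = {0,1,2,3}" by auto

lemma lf_e:
  fixes xs :: "nat \<Rightarrow> nat \<Rightarrow> 'a::comm_ring_1"
  shows "linform 3 e4 0 xs = xs 0" "linform 3 e4 1 xs = vadd (xs 0) (xs 1)"
    "linform 3 e4 2 xs = vadd (xs 0) (xs 2)" "linform 3 e4 3 xs = vadd (vadd (xs 0) (xs 1)) (xs 2)"
  unfolding linform_def vadd_def e4_def lessThan3 by (simp_all add: fun_eq_iff add_ac)

lemma Mx_e:
  fixes a :: "nat \<Rightarrow> 'a::comm_ring_1"
  shows "Mx 4 e4 a 1 2 = a 3" "Mx 4 e4 a 1 1 = a 1 + a 3" "Mx 4 e4 a 2 2 = a 2 + a 3"
    "Mx 4 e4 a 0 0 = a 0 + a 1 + a 2 + a 3"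
  unfolding Mx_def e4_def lessThan4 by (simp_all add: add_ac)

lemma prod4: "(\<Prod>i<4::nat. F i) = F 0 * F 1 * F 2 * (F 3 :: 'b::comm_monoid_mult)"
  unfolding lessThan4 by (simp add: mult_ac)

lemma Mx_nonzero:
  fixes a :: "nat \<Rightarrow> 'a::field"
  assumes a: "a \<in> PiE {..<4} (\<lambda>_. UNIV)" and ne: "a \<noteq> (\<lambda>i\<in>{..<4::nat}. 0)"
  shows "\<exists>r\<in>{..<3::nat}. \<exists>s\<in>{..<3::nat}. Mx 4 e4 a r s \<noteq> 0"
proof (rule ccontr)
  assume "\<not> ?thesis"
  hence z: "Mx 4 e4 a r s = 0" if "r < 3" "s < 3" for r s using that by auto
  have h1: "a 3 = 0" proof -
    have "Mx 4 e4 a 1 2 = 0" by (rule z) simp_all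
    thus ?thesis using Mx_e(1)[of a] by metis
  qed
  have h2: "a 1 + a 3 = 0" proof -
    have "Mx 4 e4 a 1 1 = 0" by (rule z) simp_all
    thus ?thesis using Mx_e(2)[of a] by metis
  qed
  have h3: "a 2 + a 3 = 0" proof -
    have "Mx 4 e4 a 2 2 = 0" by (rule z) simp_all
    thus ?thesis using Mx_e(3)[of a] by metis
  qed
  have h4: "a 0 + a 1 + a 2 + a 3 = 0" proof -
    have "Mx 4 e4 a 0 0 = 0" by (rule z) simp_all
    thus ?thesis using Mx_e(4)[of a] by metis
  qed
  have "a 3 = 0" by (rule h1)
  moreover have "a 1 = 0" using h1 h2 by simp
  moreover have "a 2 = 0" using h1 h3 by simp
  moreover have "a 0 = 0" using h1 h2 h3 h4 by simp
  ultimately have "a i = 0" if "i < 4" for i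
    using that by (metis lessThan4 lessThan_iff insert_iff empty_iff)
  hence "a = (\<lambda>i\<in>{..<4::nat}. 0)" using a by (auto simp: fun_eq_iff PiE_def extensional_def)
  thus False using ne by simp
qed

context chr begin

lemma wz:
  fixes \<alpha> :: real
  defines "w \<equiv> (\<lambda>t::'a. complex_of_real (1 / real CARD('a) - (if t = 0 then \<alpha> else 0)))"
  shows "(\<Sum>t\<in>UNIV. w t * \<psi> (t * z)) = complex_of_real ((if z = 0 then 1 else 0) - \<alpha>)"
proof -
  have p0: "real CARD('a) > 0" by simp
  have "(\<Sum>t\<in>UNIV. w t * \<psi> (t * z)) = (\<Sum>t\<in>UNIV. of_real (1 / real CARD('a)) * \<psi> (t * z) - (if t = 0 then of_real \<alpha> else 0))"
    by (intro sum.cong refl) (auto simp: w_def psi0 algebra_simps)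
  also have "\<dots> = of_real (1 / real CARD('a)) * (\<Sum>t\<in>UNIV. \<psi> (t * z)) - of_real \<alpha>"
    by (simp add: sum_subtractf sum_distrib_left)
  also have "\<dots> = complex_of_real ((if z = 0 then 1 else 0) - \<alpha>)"
    using p0 by (simp add: indic)
  finally show ?thesis .
qed


lemma U2bound:
  fixes k :: nat
  assumes k: "k \<ge> 1"
  defines "A \<equiv> {y \<in> (vecs (2*k) :: (nat\<Rightarrow>'a) set). Qf k y = 0}"
  defines "\<alpha> \<equiv> real (card A) / real (card (vecs (2*k) :: (nat\<Rightarrow>'a) set))"
  shows "norm (U2_pow4 (2*k) (\<lambda>x. complex_of_real (indicator A x - \<alpha>))) \<le> 2 * (1 / real CARD('a))^k"
proof -
  define p where "p = CARD('a)"
  have p1: "p \<ge> 1" unfolding p_def by (simp add: Suc_le_eq)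
  define Y where "Y = real p ^ k"
  have Y1: "Y \<ge> 1" unfolding Y_def using p1 by simp
  have qk: "(1 / real CARD('a))^k = 1 / Y" unfolding Y_def p_def by (simp add: power_one_over)
  define f where "f = (\<lambda>x. complex_of_real (indicator A x - \<alpha>))"
  define \<beta> where "\<beta> = 1 / real p - \<alpha>"
  define w where "w = (\<lambda>t::'a. complex_of_real (1 / real CARD('a) - (if t = 0 then \<alpha> else 0)))"
  have cv: "card (vecs (2*k) :: (nat\<Rightarrow>'a) set) = p ^ (2*k)" unfolding p_def by (rule card_vecs)
  have cA: "p * card A = p ^ (2*k) + (p - 1) * p ^ k" unfolding A_def p_def by (rule cardA)
  have cAr: "real p * real (card A) = Y * Y + (real p - 1) * Y"
  proof -
    have "real (p * card A) = real (p ^ (2*k) + (p - 1) * p ^ k)" using cA by simp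
    thus ?thesis using p1 unfolding Y_def by (simp add: power_mult power2_eq_square of_nat_diff mult.commute)
  qed
  have alpha: "\<alpha> = real (card A) / (Y * Y)"
    unfolding \<alpha>_def cv Y_def by (simp add: power_mult power2_eq_square mult.commute)
  have beta: "\<bar>\<beta>\<bar> \<le> 1 / Y"
  proof -
    have "\<beta> = (Y * Y - real p * real (card A)) / (real p * (Y * Y))"
      unfolding \<beta>_def alpha using p1 Y1 by (simp add: field_simps)
    also have "\<dots> = - ((real p - 1) * Y) / (real p * (Y * Y))" by (simp add: cAr)
    finally have b0: "\<beta> = - ((real p - 1) * Y) / (real p * (Y * Y))" .
    have pr: "real p > 0" using p1 by simp
    have "- ((real p - 1) * Y) / (real p * (Y * Y)) = - ((real p - 1) / (real p * Y))"
      using Y1 pr by (simp add: field_simps)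
    hence b: "\<beta> = - ((real p - 1) / (real p * Y))" using b0 by simp
    have "(real p - 1) / (real p * Y) \<le> 1 / Y" using p1 Y1 by (simp add: field_simps)
    moreover have "(real p - 1) / (real p * Y) \<ge> 0" using p1 Y1 by simp
    ultimately show ?thesis unfolding b by simp
  qed
  have Yq: "1 / Y \<le> 1 / real p"
  proof -
    have "real p \<le> Y" unfolding Y_def using p1 k by (metis of_nat_0_less_iff one_le_power power_increasing power_one_right less_le_trans zero_less_one of_nat_1 of_nat_mono le_numeral_extra(4) power_mono) 
    thus ?thesis using p1 by (simp add: frac_le)
  qed
  have w0: "w 0 = complex_of_real \<beta>" unfolding w_def \<beta>_def p_def by simp
  have nw: "norm (w t) \<le> 1 / real p" for t
  proof (cases "t = 0")
    case True thus ?thesis using w0 beta Yq by simp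
  next
    case False thus ?thesis unfolding w_def p_def by (simp add: norm_divide)
  qed
  have fw: "f y = (\<Sum>t\<in>UNIV. w t * \<psi> (t * Qf k y))" if y: "y \<in> vecs (2*k)" for y
  proof -
    have "(\<Sum>t\<in>UNIV. w t * \<psi> (t * Qf k y)) = complex_of_real ((if Qf k y = 0 then 1 else 0) - \<alpha>)"
      unfolding w_def by (rule wz)
    thus ?thesis unfolding f_def A_def using y by (simp add: indicator_def)
  qed
  have fr: "cnj (f y) = f y" for y unfolding f_def by simp
  define X where "X a = (\<Prod>i<4. w (a i)) * of_nat (CARD('a) ^ 3 * kerc {..<3} (Mx 4 e4 a)) ^ k" for a
  have S: "(\<Sum>x\<in>vecs (2*k). \<Sum>h1\<in>vecs (2*k). \<Sum>h2\<in>vecs (2*k).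
      f x * cnj (f (vadd x h1)) * cnj (f (vadd x h2)) * f (vadd (vadd x h1) h2))
     = (\<Sum>a\<in>PiE {..<4::nat} (\<lambda>_. UNIV). X a)"
  proof -
    have "(\<Sum>x\<in>vecs (2*k). \<Sum>h1\<in>vecs (2*k). \<Sum>h2\<in>vecs (2*k).
      f x * cnj (f (vadd x h1)) * cnj (f (vadd x h2)) * f (vadd (vadd x h1) h2))
      = (\<Sum>x\<in>vecs (2*k). \<Sum>h1\<in>vecs (2*k). \<Sum>h2\<in>vecs (2*k).
      (\<lambda>x h1 h2. f x * f (vadd x h1) * f (vadd x h2) * f (vadd (vadd x h1) h2)) x h1 h2)"
      by (simp only: fr)
    also have "\<dots> = (\<Sum>xs\<in>PiE {..<3::nat} (\<lambda>_. vecs (2*k)).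
      (\<lambda>x h1 h2. f x * f (vadd x h1) * f (vadd x h2) * f (vadd (vadd x h1) h2)) (xs 0) (xs 1) (xs 2))"
      by (rule bij3[symmetric])
    also have "\<dots> = (\<Sum>xs\<in>PiE {..<3::nat} (\<lambda>_. vecs (2*k)). \<Prod>i<4. f (linform 3 e4 i xs))"
      by (simp only: prod4 lf_e)
    also have "\<dots> = (\<Sum>xs\<in>PiE {..<3::nat} (\<lambda>_. vecs (2*k)). \<Prod>i<4.
        (\<Sum>t\<in>UNIV. (\<lambda>_. w) i t * \<psi> (t * Qf k (linform 3 e4 i xs))))"
      by (intro sum.cong refl prod.cong) (simp add: fw linform_vecs)
    also have "\<dots> = (\<Sum>a\<in>PiE {..<4::nat} (\<lambda>_. UNIV). X a)"
      unfolding X_def by (rule weighted)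
    finally show ?thesis .
  qed
  define a0 where "a0 = (\<lambda>i\<in>{..<4::nat}. (0::'a))"
  have a0P: "a0 \<in> PiE {..<4::nat} (\<lambda>_. UNIV)" unfolding a0_def by simp
  have nX0: "norm (X a0) \<le> \<bar>\<beta>\<bar> ^ 4 * Y ^ 6"
  proof -
    have pw: "(\<Prod>i<4. w (a0 i)) = w 0 ^ 4"
      by (simp add: a0_def)
    have mz: "\<forall>r\<in>{..<3}. \<forall>s\<in>{..<3}. Mx 4 e4 a0 r s = 0"
      unfolding Mx_def a0_def by simp
    have kz: "kerc {..<3} (Mx 4 e4 a0) = CARD('a) ^ 3" using kerc_zero[OF finite_lessThan mz] by simp
    have "norm (X a0) = \<bar>\<beta>\<bar> ^ 4 * (real p ^ 3 * real p ^ 3) ^ k"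
      unfolding X_def pw kz w0 p_def by (simp add: norm_mult norm_power)
    also have "\<dots> = \<bar>\<beta>\<bar> ^ 4 * Y ^ 6" unfolding Y_def
      by (simp add: power_mult_distrib flip: power_mult power_add) (simp add: mult.commute)
    finally show ?thesis by simp
  qed
  have nX: "norm (X a) \<le> (1 / real p) ^ 4 * Y ^ 5" if a: "a \<in> PiE {..<4::nat} (\<lambda>_. UNIV)" "a \<noteq> a0" for a
  proof -
    obtain r s where rs: "r \<in> {..<3::nat}" "s \<in> {..<3::nat}" "Mx 4 e4 a r s \<noteq> 0"
      using Mx_nonzero[OF a(1)] a(2) unfolding a0_def by blast
    have kl: "kerc {..<3} (Mx 4 e4 a) \<le> CARD('a) ^ 2"
      using kerc_le[of "{..<3}" r s "Mx 4 e4 a", OF finite_lessThan rs] by simp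
    have n1: "norm (\<Prod>i<4. w (a i)) \<le> (1 / real p) ^ 4"
    proof -
      have "norm (\<Prod>i<4. w (a i)) = (\<Prod>i<4. norm (w (a i)))" by (simp add: prod_norm)
      also have "\<dots> \<le> (\<Prod>i<(4::nat). 1 / real p)" by (intro prod_mono) (simp add: nw)
      finally show ?thesis by simp
    qed
    have n2: "norm ((of_nat (CARD('a) ^ 3 * kerc {..<3} (Mx 4 e4 a)) :: complex) ^ k) \<le> Y ^ 5"
    proof -
      have "norm ((of_nat (CARD('a) ^ 3 * kerc {..<3} (Mx 4 e4 a)) :: complex) ^ k) = real (CARD('a) ^ 3 * kerc {..<3} (Mx 4 e4 a)) ^ k"
        by (simp only: norm_power norm_of_nat)
      also have "\<dots> \<le> real (CARD('a) ^ 3 * CARD('a) ^ 2) ^ k"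
      proof (rule power_mono)
        show "real (CARD('a) ^ 3 * kerc {..<3} (Mx 4 e4 a)) \<le> real (CARD('a) ^ 3 * CARD('a) ^ 2)"
          by (rule of_nat_mono, rule mult_le_mono2, rule kl)
      qed simp
      also have "\<dots> = Y ^ 5" unfolding Y_def p_def
        by (simp add: power_mult_distrib flip: power_mult power_add) (simp add: mult.commute)
      finally show ?thesis .
    qed
    have "norm (X a) = norm (\<Prod>i<4. w (a i)) * norm ((of_nat (CARD('a) ^ 3 * kerc {..<3} (Mx 4 e4 a)) :: complex) ^ k)"
      unfolding X_def by (simp only: norm_mult)
    also have "\<dots> \<le> (1 / real p) ^ 4 * Y ^ 5"
      by (rule mult_mono[OF n1 n2]) simp_all
    finally show ?thesis .
  qed
  have finP: "finite (PiE {..<4::nat} (\<lambda>_. UNIV :: 'a set))" by (rule finite_PiE) auto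
  have cardP: "card (PiE {..<4::nat} (\<lambda>_. UNIV :: 'a set)) = p ^ 4" unfolding p_def by (simp add: card_PiE)
  have "norm (\<Sum>a\<in>PiE {..<4::nat} (\<lambda>_. UNIV). X a) \<le> (\<Sum>a\<in>PiE {..<4::nat} (\<lambda>_. UNIV). norm (X a))"
    by (rule norm_sum)
  also have "\<dots> \<le> (\<Sum>a\<in>PiE {..<4::nat} (\<lambda>_. UNIV). (if a = a0 then \<bar>\<beta>\<bar> ^ 4 * Y ^ 6 else 0) + (1 / real p) ^ 4 * Y ^ 5)"
  proof (rule sum_mono)
    fix a assume a: "a \<in> PiE {..<4::nat} (\<lambda>_. UNIV :: 'a set)"
    have nn: "0 \<le> (1 / real p) ^ 4 * Y ^ 5" using Y1 by simp
    show "norm (X a) \<le> (if a = a0 then \<bar>\<beta>\<bar> ^ 4 * Y ^ 6 else 0) + (1 / real p) ^ 4 * Y ^ 5"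
    proof (cases "a = a0")
      case True thus ?thesis using nX0 nn by simp
    next
      case False thus ?thesis using nX[OF a False] by simp
    qed
  qed
  also have "\<dots> = \<bar>\<beta>\<bar> ^ 4 * Y ^ 6 + real (p ^ 4) * ((1 / real p) ^ 4 * Y ^ 5)"
    using a0P finP cardP by (simp add: sum.distrib)
  also have "\<dots> = \<bar>\<beta>\<bar> ^ 4 * Y ^ 6 + Y ^ 5"
    using p1 by (simp add: power_one_over)
  finally have nS: "norm (\<Sum>a\<in>PiE {..<4::nat} (\<lambda>_. UNIV). X a) \<le> \<bar>\<beta>\<bar> ^ 4 * Y ^ 6 + Y ^ 5" .
  have cv3: "real (card (vecs (2*k) :: (nat\<Rightarrow>'a) set) ^ 3) = Y ^ 6"
    unfolding cv Y_def by (simp add: power_mult_distrib flip: power_mult power_add) (simp add: mult.commute)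
  have "norm (U2_pow4 (2*k) f) = norm (\<Sum>a\<in>PiE {..<4::nat} (\<lambda>_. UNIV). X a) / Y ^ 6"
  proof -
    have "norm (U2_pow4 (2*k) f) = norm (\<Sum>a\<in>PiE {..<4::nat} (\<lambda>_. UNIV). X a) / norm (complex_of_nat (card (vecs (2*k) :: (nat\<Rightarrow>'a) set) ^ 3))"
      unfolding U2_pow4_def S by (simp add: norm_divide)
    also have "norm (complex_of_nat (card (vecs (2*k) :: (nat\<Rightarrow>'a) set) ^ 3)) = Y ^ 6"
      using cv3 by (simp only: norm_of_nat)
    finally show ?thesis .
  qed
  also have "\<dots> \<le> (\<bar>\<beta>\<bar> ^ 4 * Y ^ 6 + Y ^ 5) / Y ^ 6"
    using nS Y1 by (simp add: divide_right_mono)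
  also have "\<dots> = \<bar>\<beta>\<bar> ^ 4 + 1 / Y"
  proof -
    have y6: "Y ^ 6 = Y * Y ^ 5" by (simp add: eval_nat_numeral)
    have "Y ^ 6 > 0" using Y1 by simp
    thus ?thesis using Y1 unfolding y6 by (simp add: field_simps)
  qed
  also have "\<dots> \<le> 2 * (1 / Y)"
  proof -
    have "\<bar>\<beta>\<bar> \<le> 1" using beta Y1 by (meson divide_le_eq_1 le_numeral_extra(4) less_le_trans order.trans zero_less_one)
    hence "\<bar>\<beta>\<bar> ^ 4 \<le> \<bar>\<beta>\<bar>" using power_decreasing[of 1 4 "\<bar>\<beta>\<bar>"] by simp
    thus ?thesis using beta by simp
  qed
  finally show ?thesis unfolding f_def qk .
qed

end



lemma bern:
  fixes x :: real
  assumes "0 \<le> x" "x \<le> 1"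
  shows "(1 + x) ^ m \<le> 1 + (2 ^ m - 1) * x"
proof (induction m)
  case 0 thus ?case by simp
next
  case (Suc m)
  have "(1 + x) ^ Suc m = (1 + x) * (1 + x) ^ m" by simp
  also have "\<dots> \<le> (1 + x) * (1 + (2 ^ m - 1) * x)"
    using Suc.IH assms by (intro mult_left_mono) simp_all
  also have "\<dots> = 1 + 2 ^ m * x + (2 ^ m - 1) * (x * x)" by (simp add: algebra_simps)
  also have "\<dots> \<le> 1 + 2 ^ m * x + (2 ^ m - 1) * x"
  proof -
    have "x * x \<le> x" using assms by (simp add: mult_le_cancel_right1 mult_left_le)
    moreover have "(2::real) ^ m - 1 \<ge> 0" by simp
    ultimately show ?thesis by (simp add: mult_left_mono)
  qed
  also have "\<dots> = 1 + (2 ^ Suc m - 1) * x" by (simp add: algebra_simps)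
  finally show ?case .
qed

theorem theorem3p1:
  fixes p m d :: nat and gam :: "nat \<Rightarrow> nat \<Rightarrow> 'a::{field,finite}"
  assumes "prime p" and "odd p" and "CARD('a) = p"
    and "quad_forms_dependent m d gam"
  shows "\<exists>\<epsilon>>0. \<forall>\<delta>>0. \<exists>n. \<exists>A \<subseteq> (vecs n :: (nat \<Rightarrow> 'a) set).
     (let \<alpha> = real (card A) / real (card (vecs n :: (nat \<Rightarrow> 'a) set)) in
       U2_norm n (\<lambda>x. complex_of_real (indicator A x - \<alpha>)) \<le> \<delta> \<and>
       real (card {xs \<in> PiE {..<d} (\<lambda>_. vecs n). \<forall>i<m. linform d gam i xs \<in> A})
         / real (card (vecs n :: (nat \<Rightarrow> 'a) set)) ^ d \<ge> \<alpha> ^ m + \<epsilon>)"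
proof -
  have prC: "prime CARD('a)" using assms(1,3) by simp
  obtain \<psi> :: "'a \<Rightarrow> complex" where \<psi>: "\<forall>a b. \<psi>(a+b) = \<psi> a * \<psi> b" "\<exists>c. \<psi> c \<noteq> 1" "\<psi> 0 = 1"
    using char_exists[OF prC] by blast
  interpret chr \<psi> by unfold_locales (use \<psi> in auto)
  have p3: "p \<ge> 3"
  proof -
    have "p \<ge> 2" using assms(1) prime_ge_2_nat by blast
    moreover have "p \<noteq> 2" using assms(2) by auto
    ultimately show ?thesis by simp
  qed
  obtain c where c: "\<exists>i<m. c i \<noteq> 0" and rel: "\<forall>r<d. \<forall>s<d. (\<Sum>i<m. c i * (gam i r * gam i s)) = 0"
    using assms(4) unfolding quad_forms_dependent_def by blast
  obtain i0 where i0: "i0 < m" "c i0 \<noteq> 0" using c by blast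
  define q where "q = 1 / real p"
  have q0: "q > 0" and q1: "q < 1" unfolding q_def using p3 by auto
  define \<epsilon> where "\<epsilon> = (real p - 1) / 2 * q ^ m"
  have \<epsilon>0: "\<epsilon> > 0" unfolding \<epsilon>_def using p3 q0 by simp
  show ?thesis
  proof (intro exI[of _ \<epsilon>] conjI allI impI)
    show "\<epsilon> > 0" by (rule \<epsilon>0)
    fix \<delta> :: real assume \<delta>: "\<delta> > 0"
    define y where "y = min (\<delta> ^ 4 / 2) (1 / (real p * 2 ^ m))"
    have y0: "y > 0" unfolding y_def using \<delta> p3 by simp
    obtain n0 where n0: "q ^ n0 < y" using real_arch_pow_inv[OF y0 q1] by blast
    define k where "k = Suc n0"
    have k1: "k \<ge> 1" unfolding k_def by simp
    have qky: "q ^ k \<le> y"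
    proof -
      have "q ^ k \<le> q ^ n0" unfolding k_def using q0 q1 by (intro power_decreasing) simp_all
      thus ?thesis using n0 by simp
    qed
    hence qk1: "q ^ k \<le> \<delta> ^ 4 / 2" and qk2: "q ^ k \<le> 1 / (real p * 2 ^ m)" unfolding y_def by auto
    define A where "A = {y \<in> (vecs (2*k) :: (nat\<Rightarrow>'a) set). Qf k y = 0}"
    define \<alpha> where "\<alpha> = real (card A) / real (card (vecs (2*k) :: (nat\<Rightarrow>'a) set))"
    have AV: "A \<subseteq> vecs (2*k)" unfolding A_def by auto
    have Cp: "CARD('a) = p" by (rule assms(3))
    have U2: "U2_norm (2*k) (\<lambda>x. complex_of_real (indicator A x - \<alpha>)) \<le> \<delta>"
    proof -
      have nb: "norm (U2_pow4 (2*k) (\<lambda>x. complex_of_real (indicator A x - \<alpha>))) \<le> 2 * q ^ k"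
        using U2bound[OF k1] unfolding A_def \<alpha>_def q_def Cp .
      have "Re (U2_pow4 (2*k) (\<lambda>x. complex_of_real (indicator A x - \<alpha>))) \<le> \<delta> ^ 4"
        using complex_Re_le_cmod[of "U2_pow4 (2*k) (\<lambda>x. complex_of_real (indicator A x - \<alpha>))"] nb qk1 by linarith
      hence "root 4 (Re (U2_pow4 (2*k) (\<lambda>x. complex_of_real (indicator A x - \<alpha>)))) \<le> root 4 (\<delta> ^ 4)"
        by (rule real_root_le_mono[rotated]) simp
      also have "root 4 (\<delta> ^ 4) = \<delta>" using \<delta> by (simp add: real_root_power_cancel)
      finally show ?thesis unfolding U2_norm_def .
    qed
    have cv: "card (vecs (2*k) :: (nat\<Rightarrow>'a) set) = p ^ (2*k)" using card_vecs Cp by metis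
    have cA: "p * card A = p ^ (2*k) + (p - 1) * p ^ k" using cardA[of k] Cp unfolding A_def by simp
    define x where "x = (real p - 1) * q ^ k"
    have alpha: "\<alpha> = q * (1 + x)"
    proof -
      have "real (p * card A) = real (p ^ (2*k) + (p - 1) * p ^ k)" using cA by simp
      hence e: "real p * real (card A) = real p ^ (2*k) + (real p - 1) * real p ^ k"
        using p3 by (simp add: of_nat_diff)
      have pk: "real p ^ (2*k) = real p ^ k * real p ^ k" by (simp add: power_mult power2_eq_square mult.commute)
      have qk: "q ^ k = 1 / real p ^ k" unfolding q_def by (simp add: power_one_over)
      have pp: "real p > 0" "real p ^ k > 0" using p3 by auto
      have "\<alpha> = real (card A) / real p ^ (2*k)" unfolding \<alpha>_def cv by simp
      also have "\<dots> = (real p ^ (2*k) + (real p - 1) * real p ^ k) / (real p * real p ^ (2*k))"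
        using e pp by (simp add: field_simps)
      also have "\<dots> = q * (1 + x)" unfolding x_def qk q_def pk using pp by (simp add: field_simps)
      finally show ?thesis .
    qed
    have x0: "x \<ge> 0" unfolding x_def using p3 q0 by simp
    have xm: "x \<le> 1 / 2 ^ m"
    proof -
      have "x \<le> real p * q ^ k" unfolding x_def using q0 by (simp add: mult_right_mono)
      also have "\<dots> \<le> real p * (1 / (real p * 2 ^ m))" using qk2 p3 by (intro mult_left_mono) simp_all
      also have "\<dots> = 1 / 2 ^ m" using p3 by simp
      finally show ?thesis .
    qed
    have x1: "x \<le> 1"
    proof -
      have "1 / 2 ^ m \<le> (1::real)" by simp
      thus ?thesis using xm by linarith
    qed
    have am: "\<alpha> ^ m \<le> 2 * q ^ m"
    proof -
      have "(1 + x) ^ m \<le> 1 + (2 ^ m - 1) * x" by (rule bern[OF x0 x1])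
      also have "(2 ^ m - 1) * x \<le> (2 ^ m - 1) * (1 / 2 ^ m)"
        using xm by (intro mult_left_mono) simp_all
      also have "(2 ^ m - 1) * (1 / 2 ^ m) \<le> (1::real)" by (simp add: field_simps)
      finally have "(1 + x) ^ m \<le> 2" by simp
      hence "q ^ m * (1 + x) ^ m \<le> q ^ m * 2" using q0 by (intro mult_left_mono) simp_all
      thus ?thesis unfolding alpha by (simp add: power_mult_distrib mult.commute)
    qed
    define C where "C = card {xs \<in> PiE {..<d} (\<lambda>_. vecs (2*k) :: (nat\<Rightarrow>'a) set). \<forall>i<m. Qf k (linform d gam i xs) = 0}"
    have setEq: "{xs \<in> PiE {..<d} (\<lambda>_. vecs (2*k)). \<forall>i<m. linform d gam i xs \<in> A}
        = {xs \<in> PiE {..<d} (\<lambda>_. vecs (2*k) :: (nat\<Rightarrow>'a) set). \<forall>i<m. Qf k (linform d gam i xs) = 0}"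
    proof (intro equalityI subsetI)
      fix xs assume "xs \<in> {xs \<in> PiE {..<d} (\<lambda>_. vecs (2*k)). \<forall>i<m. linform d gam i xs \<in> A}"
      thus "xs \<in> {xs \<in> PiE {..<d} (\<lambda>_. vecs (2*k) :: (nat\<Rightarrow>'a) set). \<forall>i<m. Qf k (linform d gam i xs) = 0}"
        unfolding A_def by simp
    next
      fix xs assume h: "xs \<in> {xs \<in> PiE {..<d} (\<lambda>_. vecs (2*k) :: (nat\<Rightarrow>'a) set). \<forall>i<m. Qf k (linform d gam i xs) = 0}"
      hence xP: "xs \<in> PiE {..<d} (\<lambda>_. vecs (2*k))" and qz: "\<forall>i<m. Qf k (linform d gam i xs) = 0" by simp_all
      have lv: "linform d gam i xs \<in> vecs (2*k)" for i by (rule linform_vecs[OF xP])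
      show "xs \<in> {xs \<in> PiE {..<d} (\<lambda>_. vecs (2*k)). \<forall>i<m. linform d gam i xs \<in> A}"
        unfolding A_def using xP qz lv by simp
    qed
    have cM: "p ^ m * C = (\<Sum>a\<in>PiE {..<m} (\<lambda>_. UNIV :: 'a set). (p ^ d * kerc {..<d} (Mx m gam a)) ^ k)"
      unfolding C_def using countM[of m d k gam] Cp by simp
    define T where "T = (\<lambda>l::'a. \<lambda>i\<in>{..<m}. l * c i) ` UNIV"
    have TP: "T \<subseteq> PiE {..<m} (\<lambda>_. UNIV)" unfolding T_def by (intro image_subsetI, subst restrict_PiE_iff) simp
    have injT: "inj (\<lambda>l::'a. \<lambda>i\<in>{..<m}. l * c i)"
    proof (rule injI)
      fix l l' :: 'a assume "(\<lambda>i\<in>{..<m}. l * c i) = (\<lambda>i\<in>{..<m}. l' * c i)"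
      hence "(\<lambda>i\<in>{..<m}. l * c i) i0 = (\<lambda>i\<in>{..<m}. l' * c i) i0" by simp
      hence "l * c i0 = l' * c i0" using i0 by simp
      thus "l = l'" using i0 by simp
    qed
    have cT: "card T = p" unfolding T_def using card_image[OF injT] Cp by simp
    have kT: "kerc {..<d} (Mx m gam a) = p ^ d" if aT: "a \<in> T" for a
    proof -
      obtain l where l: "a = (\<lambda>i\<in>{..<m}. l * c i)" using aT unfolding T_def by blast
      have "\<forall>r\<in>{..<d}. \<forall>s\<in>{..<d}. Mx m gam a r s = 0"
      proof (intro ballI)
        fix r s assume rs: "r \<in> {..<d}" "s \<in> {..<d}"
        have "Mx m gam a r s = (\<Sum>i<m. l * (c i * (gam i r * gam i s)))"
          unfolding Mx_def l by (intro sum.cong) (auto simp: mult.assoc)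
        also have "\<dots> = l * (\<Sum>i<m. c i * (gam i r * gam i s))" by (simp add: sum_distrib_left)
        also have "\<dots> = 0" using rel rs by simp
        finally show "Mx m gam a r s = 0" .
      qed
      thus ?thesis using kerc_zero[where I="{..<d}" and M="Mx m gam a", OF finite_lessThan] Cp by simp
    qed
    have "p * (p ^ d * p ^ d) ^ k = (\<Sum>a\<in>T. (p ^ d * kerc {..<d} (Mx m gam a)) ^ k)"
      using kT cT by simp
    also have "\<dots> \<le> (\<Sum>a\<in>PiE {..<m} (\<lambda>_. UNIV :: 'a set). (p ^ d * kerc {..<d} (Mx m gam a)) ^ k)"
      by (rule sum_mono2) (use TP in \<open>auto intro: finite_PiE\<close>)
    finally have low: "p * (p ^ d * p ^ d) ^ k \<le> p ^ m * C" using cM by simp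
    have ratio: "real C / real (card (vecs (2*k) :: (nat\<Rightarrow>'a) set)) ^ d \<ge> real p * q ^ m"
    proof -
      have pp: "real p > 0" using p3 by simp
      have N: "real (card (vecs (2*k) :: (nat\<Rightarrow>'a) set)) ^ d = (real p ^ d * real p ^ d) ^ k"
      proof -
        have "real (card (vecs (2*k) :: (nat\<Rightarrow>'a) set)) ^ d = real p ^ (2*k*d)" unfolding cv by (simp add: power_mult)
        also have "\<dots> = real p ^ ((d+d)*k)" by (rule arg_cong[of _ _ "\<lambda>e. real p ^ e"]) (simp add: algebra_simps)
        also have "\<dots> = (real p ^ d * real p ^ d) ^ k" by (simp only: power_mult power_add)
        finally show ?thesis .
      qed
      have "real p * (real p ^ d * real p ^ d) ^ k \<le> real p ^ m * real C"
        using low by (metis of_nat_le_iff of_nat_mult of_nat_power)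
      hence "real p * q ^ m * (real p ^ d * real p ^ d) ^ k \<le> real C"
        unfolding q_def using pp by (simp add: field_simps power_one_over)
      thus ?thesis unfolding N using pp by (simp add: field_simps)
    qed
    have fin: "\<alpha> ^ m + \<epsilon> \<le> real p * q ^ m"
    proof -
      have "\<alpha> ^ m + \<epsilon> \<le> 2 * q ^ m + (real p - 1) / 2 * q ^ m" using am unfolding \<epsilon>_def by simp
      also have "\<dots> = (2 + (real p - 1) / 2) * q ^ m" by (simp add: algebra_simps)
      also have "\<dots> \<le> real p * q ^ m"
      proof (rule mult_right_mono)
        have p3r: "real p \<ge> 3" using p3 by simp
        show "2 + (real p - 1) / 2 \<le> real p" using p3r by (simp add: field_simps)
        show "0 \<le> q ^ m" using q0 by simp
      qed
      finally show ?thesis .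
    qed
    show "\<exists>n. \<exists>A \<subseteq> (vecs n :: (nat \<Rightarrow> 'a) set).
     (let \<alpha> = real (card A) / real (card (vecs n :: (nat \<Rightarrow> 'a) set)) in
       U2_norm n (\<lambda>x. complex_of_real (indicator A x - \<alpha>)) \<le> \<delta> \<and>
       real (card {xs \<in> PiE {..<d} (\<lambda>_. vecs n). \<forall>i<m. linform d gam i xs \<in> A})
         / real (card (vecs n :: (nat \<Rightarrow> 'a) set)) ^ d \<ge> \<alpha> ^ m + \<epsilon>)"
    proof (intro exI[of _ "2*k"] exI[of _ A] conjI)
      show "A \<subseteq> vecs (2*k)" by (rule AV)
      show "let \<alpha> = real (card A) / real (card (vecs (2*k) :: (nat \<Rightarrow> 'a) set)) in
       U2_norm (2*k) (\<lambda>x. complex_of_real (indicator A x - \<alpha>)) \<le> \<delta> \<and>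
       real (card {xs \<in> PiE {..<d} (\<lambda>_. vecs (2*k)). \<forall>i<m. linform d gam i xs \<in> A})
         / real (card (vecs (2*k) :: (nat \<Rightarrow> 'a) set)) ^ d \<ge> \<alpha> ^ m + \<epsilon>"
        unfolding Let_def \<alpha>_def[symmetric] setEq C_def[symmetric]
        using U2 ratio fin by linarith
    qed
  qed
qed


end
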